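(* Let $G$ be a connected graph in $\mathcal{C}$ and $C$ an induced $C_5$ in $G$. If $R\neq\emptyset$, then $G$ has at most 22 vertices or $G$ has a clique cutset.
   Context: $\mathcal{C}=\mathrm{Free}(\text{claw}, 4K_1, \text{5-wheel}, C_5\text{-twin}, P_5\text{-twin}, K_5-e)$, where $\mathrm{Free}(L)$ is the class of graphs with no induced subgraph isomorphic to a member of $L$; the claw is $K_{1,3}$; $4K_1$ is the edgeless graph on 4 vertices; the 5-wheel is $C_5$ plus a vertex adjacent to all five cycle vertices; the $C_5$-twin is $C_5$ plus a new vertex adjacent to one cycle vertex $v$ and both cycle-neighbours of $v$; the $P_5$-twin is a path $p_1p_2p_3p_4p_5$ plus a new vertex adjacent to exactly $p_2,p_3,p_4$; $K_5-e$ is $K_5$ minus one edge. Given an induced cycle $C$ of length 5, $R$ is the set of vertices outside $C$ with no neighbour in $C$. A clique cutset of $G$ is a set $S$ of vertices inducing a clique such that $G-S$ is disconnected. *)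

theory Defs
  imports Main
begin

definition graph :: "'a set \<Rightarrow> ('a \<Rightarrow> 'a \<Rightarrow> bool) \<Rightarrow> bool" where
  "graph V E \<longleftrightarrow> finite V \<and> (\<forall>u v. E u v \<longrightarrow> u \<in> V \<and> v \<in> V)
     \<and> (\<forall>u v. E u v \<longrightarrow> E v u) \<and> (\<forall>u. \<not> E u u)"

definition has_induced :: "'a set \<Rightarrow> ('a \<Rightarrow> 'a \<Rightarrow> bool) \<Rightarrow> 'b set \<Rightarrow> ('b \<Rightarrow> 'b \<Rightarrow> bool) \<Rightarrow> bool" where
  "has_induced V E HV HE \<longleftrightarrow> (\<exists>f. inj_on f HV \<and> f ` HV \<subseteq> V \<and>
      (\<forall>x\<in>HV. \<forall>y\<in>HV. E (f x) (f y) \<longleftrightarrow> HE x y))"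

definition edges_of :: "(nat \<times> nat) list \<Rightarrow> nat \<Rightarrow> nat \<Rightarrow> bool" where
  "edges_of L x y \<longleftrightarrow> (x, y) \<in> set L \<or> (y, x) \<in> set L"

definition claw_E :: "nat \<Rightarrow> nat \<Rightarrow> bool" where
  "claw_E = edges_of [(0,1),(0,2),(0,3)]"

definition fourK1_E :: "nat \<Rightarrow> nat \<Rightarrow> bool" where
  "fourK1_E = edges_of []"

definition C5_E :: "nat \<Rightarrow> nat \<Rightarrow> bool" where
  "C5_E = edges_of [(0,1),(1,2),(2,3),(3,4),(4,0)]"

definition wheel5_E :: "nat \<Rightarrow> nat \<Rightarrow> bool" where
  "wheel5_E = edges_of [(0,1),(1,2),(2,3),(3,4),(4,0),(5,0),(5,1),(5,2),(5,3),(5,4)]"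

definition C5_twin_E :: "nat \<Rightarrow> nat \<Rightarrow> bool" where
  "C5_twin_E = edges_of [(0,1),(1,2),(2,3),(3,4),(4,0),(5,0),(5,1),(5,4)]"

definition P5_twin_E :: "nat \<Rightarrow> nat \<Rightarrow> bool" where
  "P5_twin_E = edges_of [(0,1),(1,2),(2,3),(3,4),(5,1),(5,2),(5,3)]"

definition K5_minus_e_E :: "nat \<Rightarrow> nat \<Rightarrow> bool" where
  "K5_minus_e_E = edges_of [(0,2),(0,3),(0,4),(1,2),(1,3),(1,4),(2,3),(2,4),(3,4)]"

definition in_class_C :: "'a set \<Rightarrow> ('a \<Rightarrow> 'a \<Rightarrow> bool) \<Rightarrow> bool" where
  "in_class_C V E \<longleftrightarrow>
     \<not> has_induced V E {0..<4} claw_E \<and>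
     \<not> has_induced V E {0..<4} fourK1_E \<and>
     \<not> has_induced V E {0..<6} wheel5_E \<and>
     \<not> has_induced V E {0..<6} C5_twin_E \<and>
     \<not> has_induced V E {0..<6} P5_twin_E \<and>
     \<not> has_induced V E {0..<5} K5_minus_e_E"

definition induced_on :: "'a set \<Rightarrow> ('a \<Rightarrow> 'a \<Rightarrow> bool) \<Rightarrow> 'a \<Rightarrow> 'a \<Rightarrow> bool" where
  "induced_on S E u v \<longleftrightarrow> u \<in> S \<and> v \<in> S \<and> E u v"

definition connected_graph :: "'a set \<Rightarrow> ('a \<Rightarrow> 'a \<Rightarrow> bool) \<Rightarrow> bool" where
  "connected_graph V E \<longleftrightarrow> V \<noteq> {} \<and> (\<forall>u\<in>V. \<forall>v\<in>V. (induced_on V E)\<^sup>*\<^sup>* u v)"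

definition is_clique :: "('a \<Rightarrow> 'a \<Rightarrow> bool) \<Rightarrow> 'a set \<Rightarrow> bool" where
  "is_clique E S \<longleftrightarrow> (\<forall>x\<in>S. \<forall>y\<in>S. x \<noteq> y \<longrightarrow> E x y)"

definition clique_cutset :: "'a set \<Rightarrow> ('a \<Rightarrow> 'a \<Rightarrow> bool) \<Rightarrow> 'a set \<Rightarrow> bool" where
  "clique_cutset V E S \<longleftrightarrow> S \<subseteq> V \<and> is_clique E S \<and>
     (\<exists>u\<in>V - S. \<exists>v\<in>V - S. \<not> (induced_on (V - S) E)\<^sup>*\<^sup>* u v)"

definition induced_C5 :: "'a set \<Rightarrow> ('a \<Rightarrow> 'a \<Rightarrow> bool) \<Rightarrow> (nat \<Rightarrow> 'a) \<Rightarrow> bool" where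
  "induced_C5 V E c \<longleftrightarrow> inj_on c {0..<5} \<and> c ` {0..<5} \<subseteq> V \<and>
     (\<forall>i<5. \<forall>j<5. E (c i) (c j) \<longleftrightarrow> C5_E i j)"

definition R_set :: "'a set \<Rightarrow> ('a \<Rightarrow> 'a \<Rightarrow> bool) \<Rightarrow> (nat \<Rightarrow> 'a) \<Rightarrow> 'a set" where
  "R_set V E c = {v \<in> V - c ` {0..<5}. \<forall>i<5. \<not> E v (c i)}"

end

theory Submission imports Defs begin

lemma s4: "{0..<4::nat} = {0,1,2,3}" by auto
lemma s5: "{0..<5::nat} = {0,1,2,3,4}" by auto
lemma s6: "{0..<6::nat} = {0,1,2,3,4,5}" by auto
lemma all5: "(\<forall>i<(5::nat). P i) = (P 0 \<and> P 1 \<and> P 2 \<and> P 3 \<and> P 4)"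
  by (auto simp: less_Suc_eq numeral_eq_Suc)

definition cyc :: "'a set \<Rightarrow> ('a \<Rightarrow> 'a \<Rightarrow> bool) \<Rightarrow> 'a \<Rightarrow> 'a \<Rightarrow> 'a \<Rightarrow> 'a \<Rightarrow> 'a \<Rightarrow> bool" where
  "cyc V E a0 a1 a2 a3 a4 \<longleftrightarrow> a0 \<in> V \<and> a1 \<in> V \<and> a2 \<in> V \<and> a3 \<in> V \<and> a4 \<in> V \<and>
     distinct [a0,a1,a2,a3,a4] \<and> E a0 a1 \<and> E a1 a2 \<and> E a2 a3 \<and> E a3 a4 \<and> E a4 a0 \<and>
     \<not> E a0 a2 \<and> \<not> E a0 a3 \<and> \<not> E a1 a3 \<and> \<not> E a1 a4 \<and> \<not> E a2 a4"

definition ptype :: "('a \<Rightarrow> 'a \<Rightarrow> bool) \<Rightarrow> 'a \<Rightarrow> 'a \<Rightarrow> 'a \<Rightarrow> 'a \<Rightarrow> 'a \<Rightarrow> 'a \<Rightarrow> bool" where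
  "ptype E a0 a1 a2 a3 a4 v \<longleftrightarrow> E v a0 \<and> E v a1 \<and> \<not> E v a2 \<and> \<not> E v a3 \<and> \<not> E v a4"

definition qtype :: "('a \<Rightarrow> 'a \<Rightarrow> bool) \<Rightarrow> 'a \<Rightarrow> 'a \<Rightarrow> 'a \<Rightarrow> 'a \<Rightarrow> 'a \<Rightarrow> 'a \<Rightarrow> bool" where
  "qtype E a0 a1 a2 a3 a4 v \<longleftrightarrow> \<not> E v a0 \<and> E v a1 \<and> E v a2 \<and> E v a3 \<and> E v a4"

locale ctx =
  fixes V :: "'a set" and E :: "'a \<Rightarrow> 'a \<Rightarrow> bool"
  assumes g: "graph V E" and cl: "in_class_C V E"
begin

lemma sym: "E x y \<Longrightarrow> E y x" using g unfolding graph_def by blast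
lemma irr: "\<not> E x x" using g unfolding graph_def by blast
lemma symn: "\<not> E x y \<Longrightarrow> \<not> E y x" using sym by blast
lemma Esym: "E x y = E y x" using sym by blast
lemma fin: "finite V" using g unfolding graph_def by blast

lemma cyc_E:
  assumes "cyc V E a0 a1 a2 a3 a4"
  shows "E a0 a1" "E a1 a2" "E a2 a3" "E a3 a4" "E a4 a0"
        "E a1 a0" "E a2 a1" "E a3 a2" "E a4 a3" "E a0 a4"
        "\<not> E a0 a2" "\<not> E a0 a3" "\<not> E a1 a3" "\<not> E a1 a4" "\<not> E a2 a4"
        "\<not> E a2 a0" "\<not> E a3 a0" "\<not> E a3 a1" "\<not> E a4 a1" "\<not> E a4 a2"
  using assms sym symn unfolding cyc_def by blast+

lemma no_claw:
  assumes "a \<in> V" "b \<in> V" "c \<in> V" "d \<in> V"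
    and "E a b" "E a c" "E a d" "\<not> E b c" "\<not> E b d" "\<not> E c d"
    and "b \<noteq> c" "b \<noteq> d" "c \<noteq> d"
  shows False
proof -
  let ?f = "\<lambda>i. [a,b,c,d] ! i"
  have "has_induced V E {0..<4} claw_E"
    unfolding has_induced_def
  proof (intro exI[of _ ?f] conjI)
    show "inj_on ?f {0..<4}" unfolding s4 inj_on_def using assms irr by auto
    show "?f ` {0..<4} \<subseteq> V" unfolding s4 using assms by auto
    show "\<forall>x\<in>{0..<4}. \<forall>y\<in>{0..<4}. E (?f x) (?f y) = claw_E x y"
      using assms sym[OF assms(5)] sym[OF assms(6)] sym[OF assms(7)] symn[OF assms(8)] symn[OF assms(9)] symn[OF assms(10)]
      by (simp add: s4 claw_E_def edges_of_def irr)
  qed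
  then show False using cl unfolding in_class_C_def by blast
qed

lemma no_4K1:
  assumes "a \<in> V" "b \<in> V" "c \<in> V" "d \<in> V"
    and "\<not> E a b" "\<not> E a c" "\<not> E a d" "\<not> E b c" "\<not> E b d" "\<not> E c d"
    and "distinct [a,b,c,d]"
  shows False
proof -
  let ?f = "\<lambda>i. [a,b,c,d] ! i"
  have "has_induced V E {0..<4} fourK1_E"
    unfolding has_induced_def
  proof (intro exI[of _ ?f] conjI)
    show "inj_on ?f {0..<4}" unfolding s4 inj_on_def using assms irr by auto
    show "?f ` {0..<4} \<subseteq> V" unfolding s4 using assms by auto
    show "\<forall>x\<in>{0..<4}. \<forall>y\<in>{0..<4}. E (?f x) (?f y) = fourK1_E x y"
      using assms symn[OF assms(5)] symn[OF assms(6)] symn[OF assms(7)] symn[OF assms(8)] symn[OF assms(9)] symn[OF assms(10)]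
      by (simp add: s4 fourK1_E_def edges_of_def irr)
  qed
  then show False using cl unfolding in_class_C_def by blast
qed

lemma no_K5e:
  assumes "a \<in> V" "b \<in> V" "c \<in> V" "d \<in> V" "e \<in> V"
    and "\<not> E a b" "a \<noteq> b" "E a c" "E a d" "E a e" "E b c" "E b d" "E b e"
        "E c d" "E c e" "E d e"
  shows False
proof -
  let ?f = "\<lambda>i. [a,b,c,d,e] ! i"
  have "has_induced V E {0..<5} K5_minus_e_E"
    unfolding has_induced_def
  proof (intro exI[of _ ?f] conjI)
    show "inj_on ?f {0..<5}" unfolding s5 inj_on_def using assms irr by auto
    show "?f ` {0..<5} \<subseteq> V" unfolding s5 using assms by auto
    show "\<forall>x\<in>{0..<5}. \<forall>y\<in>{0..<5}. E (?f x) (?f y) = K5_minus_e_E x y"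
      using assms sym[OF assms(8)] sym[OF assms(9)] sym[OF assms(10)] sym[OF assms(11)] sym[OF assms(12)]
        sym[OF assms(13)] sym[OF assms(14)] sym[OF assms(15)] sym[OF assms(16)] symn[OF assms(6)]
      by (simp add: s5 K5_minus_e_E_def edges_of_def irr)
  qed
  then show False using cl unfolding in_class_C_def by blast
qed

lemma no_wheel:
  assumes "cyc V E a0 a1 a2 a3 a4" "h \<in> V"
    and "E h a0" "E h a1" "E h a2" "E h a3" "E h a4"
  shows False
proof -
  let ?f = "\<lambda>i. [a0,a1,a2,a3,a4,h] ! i"
  have "has_induced V E {0..<6} wheel5_E"
    unfolding has_induced_def
  proof (intro exI[of _ ?f] conjI)
    show "inj_on ?f {0..<6}" unfolding s6 inj_on_def using assms irr unfolding cyc_def by auto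
    show "?f ` {0..<6} \<subseteq> V" unfolding s6 using assms unfolding cyc_def by auto
    show "\<forall>x\<in>{0..<6}. \<forall>y\<in>{0..<6}. E (?f x) (?f y) = wheel5_E x y"
      using assms cyc_E[OF assms(1)] sym[OF assms(3)] sym[OF assms(4)] sym[OF assms(5)] sym[OF assms(6)] sym[OF assms(7)]
      by (simp add: s6 wheel5_E_def edges_of_def irr)
  qed
  then show False using cl unfolding in_class_C_def by blast
qed

lemma no_twin:
  assumes "cyc V E a0 a1 a2 a3 a4" "h \<in> V" "h \<notin> {a0,a1,a2,a3,a4}"
    and "E h a0" "E h a1" "\<not> E h a2" "\<not> E h a3" "E h a4"
  shows False
proof -
  let ?f = "\<lambda>i. [a0,a1,a2,a3,a4,h] ! i"
  have "has_induced V E {0..<6} C5_twin_E"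
    unfolding has_induced_def
  proof (intro exI[of _ ?f] conjI)
    show "inj_on ?f {0..<6}" unfolding s6 inj_on_def using assms irr unfolding cyc_def by auto
    show "?f ` {0..<6} \<subseteq> V" unfolding s6 using assms unfolding cyc_def by auto
    show "\<forall>x\<in>{0..<6}. \<forall>y\<in>{0..<6}. E (?f x) (?f y) = C5_twin_E x y"
      using assms cyc_E[OF assms(1)] sym[OF assms(4)] sym[OF assms(5)] symn[OF assms(6)] symn[OF assms(7)] sym[OF assms(8)]
      by (simp add: s6 C5_twin_E_def edges_of_def irr)
  qed
  then show False using cl unfolding in_class_C_def by blast
qed

end
context ctx begin
lemma cyc_rot: "cyc V E a0 a1 a2 a3 a4 \<Longrightarrow> cyc V E a1 a2 a3 a4 a0"
  using cyc_E[of a0 a1 a2 a3 a4] unfolding cyc_def by (auto simp: Esym)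

lemma G1:
  assumes c: "cyc V E a0 a1 a2 a3 a4" and "v \<in> V" "v \<notin> {a0,a1,a2,a3,a4}" "E v a0"
  shows "E v a4 \<or> E v a1"
proof (rule ccontr)
  assume h: "\<not> (E v a4 \<or> E v a1)"
  show False
    apply (rule no_claw[of a0 a4 a1 v])
    using assms h cyc_E[OF c] sym[OF assms(4)] unfolding cyc_def by (auto simp: Esym)
qed

lemma G2:
  assumes c: "cyc V E a0 a1 a2 a3 a4" and "v \<in> V" "v \<notin> {a0,a1,a2,a3,a4}"
  shows "\<not> (E v a4 \<and> E v a0 \<and> E v a1 \<and> \<not> E v a2 \<and> \<not> E v a3)"
  using no_twin[OF c assms(2,3)] by blast

lemma G3:
  assumes c: "cyc V E a0 a1 a2 a3 a4" and "v \<in> V"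
  shows "\<not> (E v a0 \<and> E v a1 \<and> E v a2 \<and> E v a3 \<and> E v a4)"
  using no_wheel[OF c assms(2)] by blast

lemma G4:
  assumes c: "cyc V E a0 a1 a2 a3 a4" and "v \<in> V" "v \<notin> {a0,a1,a2,a3,a4}"
    and p: "ptype E a0 a1 a2 a3 a4 v"
    and "r \<in> V" "r \<notin> {a0,a1,a2,a3,a4}" "\<not> E r a0" "\<not> E r a1" "\<not> E r a2" "\<not> E r a3" "\<not> E r a4"
  shows "E v r"
proof (rule ccontr)
  assume h: "\<not> E v r"
  have "v \<noteq> r" using p assms(7) unfolding ptype_def by blast
  then show False
    apply -
    apply (rule no_4K1[of v r a2 a4])
    using assms h cyc_E[OF c] unfolding cyc_def ptype_def by (auto simp: Esym)
qed

lemma G5: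
  assumes c: "cyc V E a0 a1 a2 a3 a4" and "v \<in> V" "v \<notin> {a0,a1,a2,a3,a4}"
    and q: "qtype E a0 a1 a2 a3 a4 v"
    and "r \<in> V" "r \<notin> {a0,a1,a2,a3,a4}" "\<not> E r a0" "\<not> E r a1" "\<not> E r a2" "\<not> E r a3" "\<not> E r a4"
  shows "\<not> E v r"
proof
  assume h: "E v r"
  show False
    apply (rule no_claw[of v r a1 a4])
    using assms h cyc_E[OF c] unfolding cyc_def qtype_def by (auto simp: Esym)
qed

lemma card_le2:
  assumes "finite S" "\<And>x y z. x \<in> S \<Longrightarrow> y \<in> S \<Longrightarrow> z \<in> S \<Longrightarrow> x \<noteq> y \<Longrightarrow> x \<noteq> z \<Longrightarrow> y \<noteq> z \<Longrightarrow> False"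
  shows "card S \<le> 2"
proof (rule ccontr)
  assume "\<not> card S \<le> 2"
  then have "S \<noteq> {}" by (auto simp: Esym)
  then obtain x where x: "x \<in> S" by blast
  have "card (S - {x}) > 1" using \<open>\<not> card S \<le> 2\<close> x assms(1) by simp
  then have "\<not> card (S - {x}) \<le> Suc 0" by simp
  then obtain y z where "y \<in> S - {x}" "z \<in> S - {x}" "y \<noteq> z"
    using card_le_Suc0_iff_eq[of "S - {x}"] assms(1) by (auto simp: Esym)
  then show False using assms(2)[of x y z] x by (auto simp: Esym)
qed

lemma card_le1:
  assumes "finite S" "\<And>x y. x \<in> S \<Longrightarrow> y \<in> S \<Longrightarrow> x \<noteq> y \<Longrightarrow> False"
  shows "card S \<le> 1"
  using card_le_Suc0_iff_eq[of S] assms by (auto simp: Esym)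

lemma G6:
  assumes c: "cyc V E a0 a1 a2 a3 a4" and A: "A = {a0,a1,a2,a3,a4}"
    and "r \<in> V" "r \<notin> A" "\<not> E r a0" "\<not> E r a1" "\<not> E r a2" "\<not> E r a3" "\<not> E r a4"
  shows "card {v \<in> V - A. ptype E a0 a1 a2 a3 a4 v} \<le> 2"
proof (rule card_le2)
  show "finite {v \<in> V - A. ptype E a0 a1 a2 a3 a4 v}" using fin by (auto simp: Esym)
  have adj: "E x y" if "x \<in> {v \<in> V - A. ptype E a0 a1 a2 a3 a4 v}" "y \<in> {v \<in> V - A. ptype E a0 a1 a2 a3 a4 v}" "x \<noteq> y" for x y
  proof (rule ccontr)
    assume h: "\<not> E x y"
    show False
      apply (rule no_claw[of a0 a4 x y])
      using c that h cyc_E[OF c] A unfolding cyc_def ptype_def by (auto simp: Esym)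
  qed
  have ar: "E x r" if "x \<in> {v \<in> V - A. ptype E a0 a1 a2 a3 a4 v}" for x
    using G4[OF c, of x r] that assms by (auto simp: Esym)
  fix x y z
  assume xyz: "x \<in> {v \<in> V - A. ptype E a0 a1 a2 a3 a4 v}" "y \<in> {v \<in> V - A. ptype E a0 a1 a2 a3 a4 v}"
    "z \<in> {v \<in> V - A. ptype E a0 a1 a2 a3 a4 v}" "x \<noteq> y" "x \<noteq> z" "y \<noteq> z"
  show False
    apply (rule no_K5e[of a0 r x y z])
    using xyz adj[of x y] adj[of x z] adj[of y z] ar[of x] ar[of y] ar[of z] assms
    unfolding cyc_def ptype_def by (auto simp: Esym)
qed

lemma G7:
  assumes c: "cyc V E a0 a1 a2 a3 a4" and A: "A = {a0,a1,a2,a3,a4}"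
  shows "card {v \<in> V - A. qtype E a0 a1 a2 a3 a4 v} \<le> 1"
proof (rule card_le1)
  show "finite {v \<in> V - A. qtype E a0 a1 a2 a3 a4 v}" using fin by (auto simp: Esym)
  fix x y
  assume xy: "x \<in> {v \<in> V - A. qtype E a0 a1 a2 a3 a4 v}" "y \<in> {v \<in> V - A. qtype E a0 a1 a2 a3 a4 v}" "x \<noteq> y"
  have "E x y"
  proof (rule ccontr)
    assume h: "\<not> E x y"
    show False
      apply (rule no_claw[of a1 a0 x y])
      using c xy h cyc_E[OF c] A unfolding cyc_def qtype_def by (auto simp: Esym)
  qed
  then show False
    apply -
    apply (rule no_K5e[of a2 a4 x y a3])
    using c xy cyc_E[OF c] A unfolding cyc_def qtype_def by (auto simp: Esym)
qed

lemma classify: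
  assumes c: "cyc V E a0 a1 a2 a3 a4" and "v \<in> V" "v \<notin> {a0,a1,a2,a3,a4}"
  shows "(\<not> E v a0 \<and> \<not> E v a1 \<and> \<not> E v a2 \<and> \<not> E v a3 \<and> \<not> E v a4) \<or>
    ptype E a0 a1 a2 a3 a4 v \<or> ptype E a1 a2 a3 a4 a0 v \<or> ptype E a2 a3 a4 a0 a1 v \<or>
    ptype E a3 a4 a0 a1 a2 v \<or> ptype E a4 a0 a1 a2 a3 v \<or>
    qtype E a0 a1 a2 a3 a4 v \<or> qtype E a1 a2 a3 a4 a0 v \<or> qtype E a2 a3 a4 a0 a1 v \<or>
    qtype E a3 a4 a0 a1 a2 v \<or> qtype E a4 a0 a1 a2 a3 v"
proof -
  have c1: "cyc V E a1 a2 a3 a4 a0" using cyc_rot[OF c] .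
  have c2: "cyc V E a2 a3 a4 a0 a1" using cyc_rot[OF c1] .
  have c3: "cyc V E a3 a4 a0 a1 a2" using cyc_rot[OF c2] .
  have c4: "cyc V E a4 a0 a1 a2 a3" using cyc_rot[OF c3] .
  have n1: "v \<notin> {a1,a2,a3,a4,a0}" "v \<notin> {a2,a3,a4,a0,a1}" "v \<notin> {a3,a4,a0,a1,a2}" "v \<notin> {a4,a0,a1,a2,a3}"
    using assms(3) by (auto simp: Esym)
  note x = G1[OF c assms(2,3)] G1[OF c1 assms(2) n1(1)] G1[OF c2 assms(2) n1(2)]
    G1[OF c3 assms(2) n1(3)] G1[OF c4 assms(2) n1(4)]
    G2[OF c assms(2,3)] G2[OF c1 assms(2) n1(1)] G2[OF c2 assms(2) n1(2)]
    G2[OF c3 assms(2) n1(3)] G2[OF c4 assms(2) n1(4)] G3[OF c assms(2)]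
  show ?thesis using x unfolding ptype_def qtype_def
    by (cases "E v a0"; cases "E v a1"; cases "E v a2"; cases "E v a3"; cases "E v a4"; simp)
qed

end

lemma card_Un_bound: "card X \<le> a \<Longrightarrow> card Y \<le> b \<Longrightarrow> card (X \<union> Y) \<le> a + b"
  using card_Un_le[of X Y] by linarith

theorem claim17:
  fixes V :: "'a set" and E :: "'a \<Rightarrow> 'a \<Rightarrow> bool" and c :: "nat \<Rightarrow> 'a"
  assumes "graph V E"
    and "connected_graph V E"
    and "in_class_C V E"
    and "induced_C5 V E c"
    and "R_set V E c \<noteq> {}"
  shows "card V \<le> 22 \<or> (\<exists>S. clique_cutset V E S)"
proof -
  interpret ctx V E using assms(1,3) by unfold_locales
  define A where "A = {c 0, c 1, c 2, c 3, c 4}"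
  have img: "c ` {0..<5} = A" unfolding A_def by (auto simp: s5)
  have e: "\<And>i j. i < 5 \<Longrightarrow> j < 5 \<Longrightarrow> E (c i) (c j) = C5_E i j"
    using assms(4) unfolding induced_C5_def by blast
  have inj: "inj_on c (set [0,1,2,3,4])"
    using assms(4) unfolding induced_C5_def by (simp add: s5)
  have "distinct (map c [0,1,2,3,4])" unfolding distinct_map using inj by simp
  then have dist: "distinct [c 0, c 1, c 2, c 3, c 4]" by simp
  have inV: "A \<subseteq> V" using assms(4) img unfolding induced_C5_def by blast
  have c0: "cyc V E (c 0) (c 1) (c 2) (c 3) (c 4)"
    unfolding cyc_def using dist inV e[of 0 1] e[of 1 2] e[of 2 3] e[of 3 4] e[of 4 0]
      e[of 0 2] e[of 0 3] e[of 1 3] e[of 1 4] e[of 2 4]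
    by (simp add: A_def C5_E_def edges_of_def)
  have c1: "cyc V E (c 1) (c 2) (c 3) (c 4) (c 0)" using cyc_rot[OF c0] .
  have c2: "cyc V E (c 2) (c 3) (c 4) (c 0) (c 1)" using cyc_rot[OF c1] .
  have c3: "cyc V E (c 3) (c 4) (c 0) (c 1) (c 2)" using cyc_rot[OF c2] .
  have c4: "cyc V E (c 4) (c 0) (c 1) (c 2) (c 3)" using cyc_rot[OF c3] .
  have A1: "A = {c 1, c 2, c 3, c 4, c 0}" "A = {c 2, c 3, c 4, c 0, c 1}"
    "A = {c 3, c 4, c 0, c 1, c 2}" "A = {c 4, c 0, c 1, c 2, c 3}" unfolding A_def by auto
  define Rs where "Rs = R_set V E c"
  have Rs_def': "Rs = {v \<in> V - A. \<not> E v (c 0) \<and> \<not> E v (c 1) \<and> \<not> E v (c 2) \<and> \<not> E v (c 3) \<and> \<not> E v (c 4)}"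
    unfolding Rs_def R_set_def img all5 ..
  obtain r0 where r0: "r0 \<in> Rs" using assms(5) Rs_def by blast
  define S where "S = {v \<in> V - A - Rs. \<exists>r\<in>Rs. E v r}"
  show ?thesis
  proof (cases "is_clique E S")
    case True
    have reach: "(induced_on (V - S) E)\<^sup>*\<^sup>* x y \<Longrightarrow> x \<in> Rs \<Longrightarrow> y \<in> Rs" for x y
    proof (induction rule: rtranclp_induct)
      case base then show ?case .
    next
      case (step y z)
      then have yR: "y \<in> Rs" by blast
      have z: "z \<in> V - S" "E y z" using step(2) unfolding induced_on_def by auto
      have "z \<notin> A" using yR z(2) unfolding Rs_def' A_def by auto
      show ?case
      proof (rule ccontr)
        assume "z \<notin> Rs"
        then have "z \<in> S" using z \<open>z \<notin> A\<close> yR sym unfolding S_def by blast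
        then show False using z by blast
      qed
    qed
    have h1: "S \<subseteq> V" unfolding S_def by blast
    have h2: "r0 \<in> V - S" using r0 unfolding S_def Rs_def' by blast
    have h3: "c 0 \<in> V - S" using inV unfolding S_def A_def by blast
    have h4: "\<not> (induced_on (V - S) E)\<^sup>*\<^sup>* r0 (c 0)"
      using reach[of r0 "c 0"] r0 unfolding Rs_def' A_def by blast
    have "clique_cutset V E S"
      unfolding clique_cutset_def using h1 h2 h3 h4 True by blast
    then show ?thesis by blast
  next
    case False
    then obtain p q where pq: "p \<in> S" "q \<in> S" "p \<noteq> q" "\<not> E p q"
      unfolding is_clique_def by blast
    have Rs_facts: "r \<in> V" "r \<notin> A" "\<not> E r (c 0)" "\<not> E r (c 1)" "\<not> E r (c 2)" "\<not> E r (c 3)" "\<not> E r (c 4)"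
      if "r \<in> Rs" for r using that unfolding Rs_def' by auto
    have Rs_A: "r \<notin> {c 0, c 1, c 2, c 3, c 4}" "r \<notin> {c 1, c 2, c 3, c 4, c 0}" "r \<notin> {c 2, c 3, c 4, c 0, c 1}"
      "r \<notin> {c 3, c 4, c 0, c 1, c 2}" "r \<notin> {c 4, c 0, c 1, c 2, c 3}" if "r \<in> Rs" for r
      using Rs_facts(2)[OF that] A1 unfolding A_def by auto
    have cls: "v \<in> Rs \<or>
    ptype E (c 0) (c 1) (c 2) (c 3) (c 4) v \<or> ptype E (c 1) (c 2) (c 3) (c 4) (c 0) v \<or> ptype E (c 2) (c 3) (c 4) (c 0) (c 1) v \<or>
    ptype E (c 3) (c 4) (c 0) (c 1) (c 2) v \<or> ptype E (c 4) (c 0) (c 1) (c 2) (c 3) v \<or>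
    qtype E (c 0) (c 1) (c 2) (c 3) (c 4) v \<or> qtype E (c 1) (c 2) (c 3) (c 4) (c 0) v \<or> qtype E (c 2) (c 3) (c 4) (c 0) (c 1) v \<or>
    qtype E (c 3) (c 4) (c 0) (c 1) (c 2) v \<or> qtype E (c 4) (c 0) (c 1) (c 2) (c 3) v"
      if "v \<in> V" "v \<notin> A" for v
      using classify[OF c0 that(1)] that unfolding Rs_def' A_def by auto
    have vA: "v \<notin> {c 0, c 1, c 2, c 3, c 4}" "v \<notin> {c 1, c 2, c 3, c 4, c 0}" "v \<notin> {c 2, c 3, c 4, c 0, c 1}"
      "v \<notin> {c 3, c 4, c 0, c 1, c 2}" "v \<notin> {c 4, c 0, c 1, c 2, c 3}" if "v \<notin> A" for v
      using that A1 unfolding A_def by auto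
    have Sadj: "E v r'" if vS: "v \<in> S" and rR: "r' \<in> Rs" for v r'
    proof -
      obtain r where r: "r \<in> Rs" "E v r" and v: "v \<in> V" "v \<notin> A" "v \<notin> Rs" using vS unfolding S_def by blast
      note rf = Rs_facts[OF r(1)] Rs_A[OF r(1)]
      note rf' = Rs_facts[OF rR] Rs_A[OF rR]
      note va = vA[OF v(2)]
      from cls[OF v(1,2)] v(3) show ?thesis
      proof (elim disjE)
        assume "qtype E (c 0) (c 1) (c 2) (c 3) (c 4) v"
        from G5[OF c0 v(1) va(1) this rf(1) rf(8) rf(3-7)] r(2) show ?thesis by blast
      next
        assume "qtype E (c 1) (c 2) (c 3) (c 4) (c 0) v"
        from G5[OF c1 v(1) va(2) this rf(1) rf(9) rf(4-7) rf(3)] r(2) show ?thesis by blast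
      next
        assume "qtype E (c 2) (c 3) (c 4) (c 0) (c 1) v"
        from G5[OF c2 v(1) va(3) this rf(1) rf(10) rf(5-7) rf(3-4)] r(2) show ?thesis by blast
      next
        assume "qtype E (c 3) (c 4) (c 0) (c 1) (c 2) v"
        from G5[OF c3 v(1) va(4) this rf(1) rf(11) rf(6-7) rf(3-5)] r(2) show ?thesis by blast
      next
        assume "qtype E (c 4) (c 0) (c 1) (c 2) (c 3) v"
        from G5[OF c4 v(1) va(5) this rf(1) rf(12) rf(7) rf(3-6)] r(2) show ?thesis by blast
      next
        assume "ptype E (c 0) (c 1) (c 2) (c 3) (c 4) v"
        from G4[OF c0 v(1) va(1) this rf'(1) rf'(8) rf'(3-7)] show ?thesis .
      next
        assume "ptype E (c 1) (c 2) (c 3) (c 4) (c 0) v"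
        from G4[OF c1 v(1) va(2) this rf'(1) rf'(9) rf'(4-7) rf'(3)] show ?thesis .
      next
        assume "ptype E (c 2) (c 3) (c 4) (c 0) (c 1) v"
        from G4[OF c2 v(1) va(3) this rf'(1) rf'(10) rf'(5-7) rf'(3-4)] show ?thesis .
      next
        assume "ptype E (c 3) (c 4) (c 0) (c 1) (c 2) v"
        from G4[OF c3 v(1) va(4) this rf'(1) rf'(11) rf'(6-7) rf'(3-5)] show ?thesis .
      next
        assume "ptype E (c 4) (c 0) (c 1) (c 2) (c 3) v"
        from G4[OF c4 v(1) va(5) this rf'(1) rf'(12) rf'(7) rf'(3-6)] show ?thesis .
      qed simp
    qed
    have Rcl: "E x y" if "x \<in> Rs" "y \<in> Rs" "x \<noteq> y" for x y
    proof (rule ccontr)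
      assume h: "\<not> E x y"
      show False
        apply (rule no_4K1[of x y "c 0" "c 2"])
        using Rs_facts[OF that(1)] Rs_facts[OF that(2)] h that(3) c0 unfolding cyc_def A_def
        by (auto simp: Esym)
    qed
    have cR: "card Rs \<le> 2"
    proof (rule card_le2)
      show "finite Rs" unfolding Rs_def' using fin by auto
      fix x y z assume xyz: "x \<in> Rs" "y \<in> Rs" "z \<in> Rs" "x \<noteq> y" "x \<noteq> z" "y \<noteq> z"
      have pS: "p \<notin> Rs" "q \<notin> Rs" "p \<in> V" "q \<in> V" using pq unfolding S_def by auto
      show False
        apply (rule no_K5e[of p q x y z])
        using pS pq xyz Rs_facts[OF xyz(1)] Rs_facts[OF xyz(2)] Rs_facts[OF xyz(3)]
          Sadj[OF pq(1) xyz(1)] Sadj[OF pq(1) xyz(2)] Sadj[OF pq(1) xyz(3)]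
          Sadj[OF pq(2) xyz(1)] Sadj[OF pq(2) xyz(2)] Sadj[OF pq(2) xyz(3)]
          Rcl[OF xyz(1,2,4)] Rcl[OF xyz(1,3,5)] Rcl[OF xyz(2,3,6)]
        by auto
    qed
    define P0 where "P0 = {v \<in> V - A. ptype E (c 0) (c 1) (c 2) (c 3) (c 4) v}"
    define P1 where "P1 = {v \<in> V - A. ptype E (c 1) (c 2) (c 3) (c 4) (c 0) v}"
    define P2 where "P2 = {v \<in> V - A. ptype E (c 2) (c 3) (c 4) (c 0) (c 1) v}"
    define P3 where "P3 = {v \<in> V - A. ptype E (c 3) (c 4) (c 0) (c 1) (c 2) v}"
    define P4 where "P4 = {v \<in> V - A. ptype E (c 4) (c 0) (c 1) (c 2) (c 3) v}"
    define Q0 where "Q0 = {v \<in> V - A. qtype E (c 0) (c 1) (c 2) (c 3) (c 4) v}"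
    define Q1 where "Q1 = {v \<in> V - A. qtype E (c 1) (c 2) (c 3) (c 4) (c 0) v}"
    define Q2 where "Q2 = {v \<in> V - A. qtype E (c 2) (c 3) (c 4) (c 0) (c 1) v}"
    define Q3 where "Q3 = {v \<in> V - A. qtype E (c 3) (c 4) (c 0) (c 1) (c 2) v}"
    define Q4 where "Q4 = {v \<in> V - A. qtype E (c 4) (c 0) (c 1) (c 2) (c 3) v}"
    note r0f = Rs_facts[OF r0]
    have bP: "card P0 \<le> 2" "card P1 \<le> 2" "card P2 \<le> 2" "card P3 \<le> 2" "card P4 \<le> 2"
      unfolding P0_def P1_def P2_def P3_def P4_def
      using G6[OF c0 A_def r0f(1,2) r0f(3-7)] G6[OF c1 A1(1) r0f(1,2) r0f(4-7) r0f(3)]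
        G6[OF c2 A1(2) r0f(1,2) r0f(5-7) r0f(3-4)] G6[OF c3 A1(3) r0f(1,2) r0f(6-7) r0f(3-5)]
        G6[OF c4 A1(4) r0f(1,2) r0f(7) r0f(3-6)] by auto
    have bQ: "card Q0 \<le> 1" "card Q1 \<le> 1" "card Q2 \<le> 1" "card Q3 \<le> 1" "card Q4 \<le> 1"
      unfolding Q0_def Q1_def Q2_def Q3_def Q4_def
      using G7[OF c0 A_def] G7[OF c1 A1(1)] G7[OF c2 A1(2)] G7[OF c3 A1(3)] G7[OF c4 A1(4)] by auto
    have bA: "card A \<le> 5" unfolding A_def using card_length[of "[c 0, c 1, c 2, c 3, c 4]"] by simp
    define U where "U = A \<union> (Rs \<union> (P0 \<union> (P1 \<union> (P2 \<union> (P3 \<union> (P4 \<union> (Q0 \<union> (Q1 \<union> (Q2 \<union> (Q3 \<union> Q4))))))))))"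
    have sub: "V \<subseteq> U"
    proof
      fix v assume v: "v \<in> V"
      show "v \<in> U"
      proof (cases "v \<in> A")
        case True then show ?thesis unfolding U_def by blast
      next
        case False
        from cls[OF v False] show ?thesis
          unfolding U_def P0_def P1_def P2_def P3_def P4_def Q0_def Q1_def Q2_def Q3_def Q4_def
          using v False by blast
      qed
    qed
    have fU: "finite U" unfolding U_def using fin inV
      unfolding Rs_def' P0_def P1_def P2_def P3_def P4_def Q0_def Q1_def Q2_def Q3_def Q4_def A_def
      by auto
    have "card V \<le> card U" using card_mono[OF fU sub] .
    also have "card U \<le> 5 + (2 + (2 + (2 + (2 + (2 + (2 + (1 + (1 + (1 + (1 + 1))))))))))"
      unfolding U_def
      by (intro card_Un_bound bA cR bP bQ)
    finally show ?thesis by simp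
  qed
qed

end
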